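(* Assume (A.a). Let $\beta\in[0,1)$, $\lambda\in\mathbb R$, $\{\alpha_k\}_k\subset(0,\infty)$, and let the sequences be generated by RRM. For $k\ge1$ let $\sigma_k^2:=\frac1n\sum_{t=1}^n\|\nabla f_t(z^k)-\nabla f(z^k)\|^2$. (a) For all $k\ge1$, $i\in\{1,\dots,m\}$ and $a=(a_1,\dots,a_i)\in\mathbb R_+^i$ (and arbitrary permutations), \[ \Big\|\sum_{t=1}^i a_td_t^k\Big\|^2\le 3\|a\|_1\|a\|_\infty\Big[L^2\sum_{t=1}^m\|\hat y_t^k-z^k\|^2+m\sigma_k^2\Big]+3\|a\|_1^2\|\nabla f(z^k)\|^2 . \] (b) If in addition (A.c) holds, then for all such $k,i,a$, \[ \mathbb E_k\Big[\Big\|\sum_{t=1}^i a_td_t^k\Big\|^2\Big]\le 3\|a\|_1\|a\|_\infty\Big[L^2\sum_{t=1}^m\mathbb E_k[\|\hat y_t^k-z^k\|^2]+b^{-1}\sigma_k^2\Big]+3\|a\|_1^2\|\nabla f(z^k)\|^2 . \]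
   Context: Let $n,d\in\mathbb N$, $f_1,\dots,f_n:\mathbb R^d\to\mathbb R$ continuously differentiable, $f:=\frac1n\sum_{i=1}^n f_i$, $[n]:=\{1,\dots,n\}$. Fix a mini-batch size $b\in\mathbb N$ with $m:=n/b\in\mathbb N$. Random reshuffling with momentum (RRM) with step sizes $\{\alpha_k\}_{k\ge1}\subset(0,\infty)$ and parameters $\beta,\lambda$ generates sequences as follows: start with $x^1=\tilde x^1\in\mathbb R^d$; for each $k=1,2,\dots$ choose a permutation $\pi^k=(\pi^k_1,\dots,\pi^k_n)$ of $[n]$, set $y_0^k=\tilde x^k$, $y_1^k=x^k$, and for $i=1,\dots,m$ compute $\hat y_i^k=y_i^k+\lambda(y_i^k-y_{i-1}^k)$, $d_i^k=\frac1b\sum_{j=(i-1)b+1}^{ib}\nabla f_{\pi^k_j}(\hat y_i^k)$, $y_{i+1}^k=y_i^k-\alpha_kd_i^k+\beta(y_i^k-y_{i-1}^k)$; then set $\tilde x^{k+1}=y_m^k$, $x^{k+1}=y_{m+1}^k$. The proxy iterates are $z^k:=\frac{1}{1-\beta}x^k-\frac{\beta}{1-\beta}\tilde x^k$. Assumption (A.a): there are $L>0$ and $\bar f\in\mathbb R$ such that each $\nabla f_i$ is $L$-Lipschitz and $f_i(x)\ge\bar f$ for all $x\in\mathbb R^d$, $i\in[n]$. Assumption (A.c): the permutations $\pi^1,\pi^2,\dots$ are independent and each is uniformly distributed over all permutations of $[n]$. $\mathbb E_k[\cdot]$ denotes conditional expectation given $\pi^1,\dots,\pi^{k-1}$ (so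 $x^k,\tilde x^k,z^k$ are fixed and only $\pi^k$ is random). $\|\cdot\|_1,\|\cdot\|_\infty$ are the $\ell_1$ and $\ell_\infty$ norms. *)

theory Defs
  imports "HOL-Analysis.Analysis" "HOL-Probability.Probability"
begin

text \<open>One epoch of random reshuffling with momentum (RRM).
  g i is the gradient of f_i, b the mini-batch size, al the step size of the epoch,
  p the permutation of {1..n} used in the epoch, xt = x-tilde^k, x = x^k.
  rrm_pair ... i = (y_i, y_(i+1)).\<close>
primrec rrm_pair :: "(nat \<Rightarrow> 'a::real_vector \<Rightarrow> 'a) \<Rightarrow> nat \<Rightarrow> real \<Rightarrow> real \<Rightarrow> real
    \<Rightarrow> (nat \<Rightarrow> nat) \<Rightarrow> 'a \<Rightarrow> 'a \<Rightarrow> nat \<Rightarrow> 'a \<times> 'a" where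
  "rrm_pair g b al beta lam p xt x 0 = (xt, x)"
| "rrm_pair g b al beta lam p xt x (Suc i) =
     (let u = fst (rrm_pair g b al beta lam p xt x i);
          v = snd (rrm_pair g b al beta lam p xt x i);
          yh = v + lam *\<^sub>R (v - u);
          dd = (1 / real b) *\<^sub>R (\<Sum>j\<in>{i*b+1..Suc i*b}. g (p j) yh)
      in (v, v - al *\<^sub>R dd + beta *\<^sub>R (v - u)))"

definition rrm_y where
  "rrm_y g b al beta lam p xt x i = fst (rrm_pair g b al beta lam p xt x i)"

definition rrm_yhat where
  "rrm_yhat g b al beta lam p xt x i =
     rrm_y g b al beta lam p xt x i
       + lam *\<^sub>R (rrm_y g b al beta lam p xt x i - rrm_y g b al beta lam p xt x (i - 1))"

definition rrm_dir where
  "rrm_dir g b al beta lam p xt x i =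
     (1 / real b) *\<^sub>R (\<Sum>j\<in>{(i-1)*b+1..i*b}. g (p j) (rrm_yhat g b al beta lam p xt x i))"

text \<open>Outer loop: rrm_state ... k = (x-tilde^(k+1), x^(k+1)); alpha k and prm k are the
  step size and the permutation of epoch k (k >= 1); m = n/b inner steps per epoch.\<close>
primrec rrm_state :: "(nat \<Rightarrow> 'a::real_vector \<Rightarrow> 'a) \<Rightarrow> nat \<Rightarrow> nat \<Rightarrow> (nat \<Rightarrow> real) \<Rightarrow> real
    \<Rightarrow> real \<Rightarrow> (nat \<Rightarrow> nat \<Rightarrow> nat) \<Rightarrow> 'a \<Rightarrow> nat \<Rightarrow> 'a \<times> 'a" where
  "rrm_state g b m alpha beta lam prm x1 0 = (x1, x1)"
| "rrm_state g b m alpha beta lam prm x1 (Suc k) =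
     rrm_pair g b (alpha (Suc k)) beta lam (prm (Suc k))
       (fst (rrm_state g b m alpha beta lam prm x1 k))
       (snd (rrm_state g b m alpha beta lam prm x1 k)) m"

definition rrm_xt where "rrm_xt g b m alpha beta lam prm x1 k = fst (rrm_state g b m alpha beta lam prm x1 (k - 1))"
definition rrm_x  where "rrm_x g b m alpha beta lam prm x1 k = snd (rrm_state g b m alpha beta lam prm x1 (k - 1))"

definition rrm_z where
  "rrm_z g b m alpha beta lam prm x1 k =
     (1 / (1 - beta)) *\<^sub>R rrm_x g b m alpha beta lam prm x1 k
       - (beta / (1 - beta)) *\<^sub>R rrm_xt g b m alpha beta lam prm x1 k"

definition rrm_D where
  "rrm_D g b m alpha beta lam prm x1 k i =
     rrm_dir g b (alpha k) beta lam (prm k) (rrm_xt g b m alpha beta lam prm x1 k) (rrm_x g b m alpha beta lam prm x1 k) i"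

definition rrm_Yhat where
  "rrm_Yhat g b m alpha beta lam prm x1 k i =
     rrm_yhat g b (alpha k) beta lam (prm k) (rrm_xt g b m alpha beta lam prm x1 k) (rrm_x g b m alpha beta lam prm x1 k) i"

text \<open>Conditional expectation E_k: given prm 1, ..., prm (k-1), the permutation prm k is
  uniformly distributed over the permutations of {1..n} (assumption (A.c)).\<close>
definition Ek :: "nat \<Rightarrow> (nat \<Rightarrow> nat \<Rightarrow> nat) \<Rightarrow> nat \<Rightarrow> ((nat \<Rightarrow> nat \<Rightarrow> nat) \<Rightarrow> real) \<Rightarrow> real" where
  "Ek n prm k X = measure_pmf.expectation (pmf_of_set {p. p permutes {1..n}}) (\<lambda>p. X (prm(k := p)))"

end

theory Submission
  imports Defs
begin


lemma sum_perm_comp: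
  assumes q: "q permutes S"
  shows "(\<Sum>p\<in>{p. p permutes S}. G p) = (\<Sum>p\<in>{p. p permutes S}. G (p \<circ> q))"
proof (rule sum.reindex_bij_witness[where i="\<lambda>p. p \<circ> q" and j="\<lambda>p. p \<circ> inv q"])
  fix p assume "p \<in> {p. p permutes S}"
  show "p \<circ> inv q \<circ> q = p" using permutes_inv_o(2)[OF q] by (simp add: o_assoc[symmetric])
  show "p \<circ> inv q \<in> {p. p permutes S}" using \<open>p \<in> _\<close> permutes_compose[OF permutes_inv[OF q]] by auto
  show "p \<circ> q \<circ> inv q = p" using permutes_inv_o(1)[OF q] by (simp add: o_assoc[symmetric])
  show "p \<circ> q \<in> {p. p permutes S}" using \<open>p \<in> _\<close> permutes_compose[OF q] by auto
  show "G (p \<circ> inv q \<circ> q) = G p" using permutes_inv_o(2)[OF q] by (simp add: o_assoc[symmetric])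
qed

lemma wcs_real:
  fixes a x :: "nat \<Rightarrow> real"
  assumes "finite I" "\<And>t. t \<in> I \<Longrightarrow> a t \<ge> 0"
  shows "(\<Sum>t\<in>I. a t * x t)\<^sup>2 \<le> (\<Sum>t\<in>I. a t) * (\<Sum>t\<in>I. a t * (x t)\<^sup>2)"
proof -
  have "(\<Sum>t\<in>I. a t * x t)\<^sup>2 = (\<Sum>s\<in>I. \<Sum>t\<in>I. (a s * a t) * (x s * x t))"
    by (simp add: power2_eq_square sum_product algebra_simps)
  also have "\<dots> \<le> (\<Sum>s\<in>I. \<Sum>t\<in>I. (a s * a t) * (((x s)\<^sup>2 + (x t)\<^sup>2)/2))"
  proof (intro sum_mono mult_left_mono)
    fix s t assume "s \<in> I" "t \<in> I"
    show "x s * x t \<le> ((x s)\<^sup>2 + (x t)\<^sup>2)/2" using sum_squares_ge_zero[of "x s - x t" 0]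
      by (simp add: power2_eq_square algebra_simps)
    show "0 \<le> a s * a t" using assms(2) \<open>s \<in> I\<close> \<open>t \<in> I\<close> by simp
  qed
  also have "\<dots> = (\<Sum>s\<in>I. \<Sum>t\<in>I. (a s * (x s)\<^sup>2) * a t / 2 + a s * (a t * (x t)\<^sup>2) / 2)"
    by (intro sum.cong refl) (simp add: field_simps)
  also have "\<dots> = ((\<Sum>s\<in>I. a s * (x s)\<^sup>2) * (\<Sum>t\<in>I. a t) + (\<Sum>s\<in>I. a s) * (\<Sum>t\<in>I. a t * (x t)\<^sup>2)) / 2"
    by (simp add: sum.distrib sum_product sum_divide_distrib add_divide_distrib)
  also have "\<dots> = (\<Sum>t\<in>I. a t) * (\<Sum>t\<in>I. a t * (x t)\<^sup>2)" by simp
  finally show ?thesis .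
qed

lemma wcs:
  fixes v :: "nat \<Rightarrow> 'a::real_normed_vector"
  assumes "finite I" "\<And>t. t \<in> I \<Longrightarrow> a t \<ge> 0" "\<And>t. t \<in> I \<Longrightarrow> a t \<le> M"
  shows "(norm (\<Sum>t\<in>I. a t *\<^sub>R v t))\<^sup>2 \<le> (\<Sum>t\<in>I. a t) * M * (\<Sum>t\<in>I. (norm (v t))\<^sup>2)"
proof -
  have "norm (\<Sum>t\<in>I. a t *\<^sub>R v t) \<le> (\<Sum>t\<in>I. a t * norm (v t))"
    using norm_sum[of "\<lambda>t. a t *\<^sub>R v t" I] assms(2) by (simp add: abs_of_nonneg cong: sum.cong)
  hence "(norm (\<Sum>t\<in>I. a t *\<^sub>R v t))\<^sup>2 \<le> (\<Sum>t\<in>I. a t * norm (v t))\<^sup>2"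
    by (simp add: power_mono)
  also have "\<dots> \<le> (\<Sum>t\<in>I. a t) * (\<Sum>t\<in>I. a t * (norm (v t))\<^sup>2)" by (rule wcs_real[OF assms(1,2)])
  also have "\<dots> \<le> (\<Sum>t\<in>I. a t) * (\<Sum>t\<in>I. M * (norm (v t))\<^sup>2)"
    by (intro mult_left_mono sum_mono sum_nonneg) (auto simp: assms(2,3) mult_right_mono)
  finally show ?thesis by (simp add: sum_distrib_left mult.assoc)
qed

lemma three_sq:
  fixes u v w :: "'a::real_normed_vector"
  shows "(norm (u + v + w))\<^sup>2 \<le> 3 * (norm u)\<^sup>2 + 3 * (norm v)\<^sup>2 + 3 * (norm w)\<^sup>2"
proof -
  have "norm (u + v + w) \<le> norm u + norm v + norm w" by (meson norm_triangle_le order_refl add_mono)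
  hence "(norm (u + v + w))\<^sup>2 \<le> (norm u + norm v + norm w)\<^sup>2" by (simp add: power_mono)
  also have "\<dots> \<le> 3 * (norm u)\<^sup>2 + 3 * (norm v)\<^sup>2 + 3 * (norm w)\<^sup>2"
    using sum_squares_ge_zero[of "norm u - norm v" "norm v - norm w"] sum_squares_ge_zero[of "norm u - norm w" 0]
    by (simp add: power2_eq_square algebra_simps)
  finally show ?thesis .
qed


lemma perm_inv1:
  assumes "j \<in> S" "j' \<in> S"
  shows "(\<Sum>p\<in>{p. p permutes S}. F (p j)) = (\<Sum>p\<in>{p. p permutes S}. F (p j'))"
  using sum_perm_comp[OF permutes_swap_id[OF assms], of "\<lambda>p. F (p j)"] by simp

lemma perm_diag:
  assumes "finite S" "j \<in> S"
  shows "real (card S) * (\<Sum>p\<in>{p. p permutes S}. h (p j)) = real (card {p. p permutes S}) * (\<Sum>u\<in>S. h u)"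
proof -
  have "real (card S) * (\<Sum>p\<in>{p. p permutes S}. h (p j)) = (\<Sum>j'\<in>S. \<Sum>p\<in>{p. p permutes S}. h (p j'))"
  proof -
    have "(\<Sum>j'\<in>S. \<Sum>p\<in>{p. p permutes S}. h (p j')) = (\<Sum>j'\<in>S. \<Sum>p\<in>{p. p permutes S}. h (p j))"
      by (intro sum.cong refl perm_inv1[OF _ assms(2)])
    thus ?thesis by simp
  qed
  also have "\<dots> = (\<Sum>p\<in>{p. p permutes S}. \<Sum>j'\<in>S. h (p j'))" by (rule sum.swap)
  also have "\<dots> = (\<Sum>p\<in>{p. p permutes S}. \<Sum>u\<in>S. h u)"
  proof (rule sum.cong[OF refl])
    fix p assume "p \<in> {p. p permutes S}"
    thus "(\<Sum>j'\<in>S. h (p j')) = (\<Sum>u\<in>S. h u)" using sum.permute[of p S h] by (simp add: comp_def)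
  qed
  finally show ?thesis by simp
qed

lemma perm_offdiag:
  fixes e :: "nat \<Rightarrow> 'a::real_inner"
  assumes "finite S" "j \<in> S" "l \<in> S" "j \<noteq> l" "(\<Sum>u\<in>S. e u) = 0"
  shows "(\<Sum>p\<in>{p. p permutes S}. inner (e (p j)) (e (p l))) \<le> 0"
proof -
  let ?P = "{p. p permutes S}"
  let ?C = "(\<Sum>p\<in>?P. inner (e (p j)) (e (p l)))"
  have inv: "(\<Sum>p\<in>?P. inner (e (p j)) (e (p l'))) = ?C" if "l' \<in> S - {j}" for l'
  proof -
    have "?C = (\<Sum>p\<in>?P. inner (e ((p \<circ> Transposition.transpose l l') j)) (e ((p \<circ> Transposition.transpose l l') l)))"
      using sum_perm_comp[OF permutes_swap_id[OF assms(3), of l'], of "\<lambda>p. inner (e (p j)) (e (p l))"] that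
      by simp
    also have "\<dots> = (\<Sum>p\<in>?P. inner (e (p j)) (e (p l')))"
      using that assms(4) by (simp add: Transposition.transpose_def)
    finally show ?thesis by simp
  qed
  have "real (card (S - {j})) * ?C = (\<Sum>l'\<in>S - {j}. \<Sum>p\<in>?P. inner (e (p j)) (e (p l')))"
    using inv by simp
  also have "\<dots> = (\<Sum>p\<in>?P. \<Sum>l'\<in>S - {j}. inner (e (p j)) (e (p l')))" by (rule sum.swap)
  also have "\<dots> = (\<Sum>p\<in>?P. - inner (e (p j)) (e (p j)))"
  proof (intro sum.cong refl)
    fix p assume "p \<in> ?P"
    hence pp: "p permutes S" by simp
    have "(\<Sum>l'\<in>S. e (p l')) = 0" using sum.permute[OF pp, of e] assms(5) by (simp add: comp_def)
    hence "(\<Sum>l'\<in>S. inner (e (p j)) (e (p l'))) = 0" by (simp add: inner_sum_right[symmetric])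
    moreover have "(\<Sum>l'\<in>S. inner (e (p j)) (e (p l'))) = inner (e (p j)) (e (p j)) + (\<Sum>l'\<in>S - {j}. inner (e (p j)) (e (p l')))"
      using sum.remove[OF assms(1,2)] by blast
    ultimately show "(\<Sum>l'\<in>S - {j}. inner (e (p j)) (e (p l'))) = - inner (e (p j)) (e (p j))" by linarith
  qed
  also have "\<dots> \<le> 0" by (intro sum_nonpos) simp
  finally have "real (card (S - {j})) * ?C \<le> 0" .
  moreover have "card (S - {j}) > 0" using assms by (metis DiffI card_gt_0_iff finite_Diff singletonD empty_iff)
  ultimately show ?thesis by (simp add: mult_le_0_iff)
qed

lemma perm_main:
  fixes e :: "nat \<Rightarrow> 'a::real_inner"
  assumes S: "finite S" "S \<noteq> {}" and e0: "(\<Sum>u\<in>S. e u) = 0" and w: "\<And>j. j \<in> S \<Longrightarrow> w j \<ge> 0"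
  shows "(\<Sum>p\<in>{p. p permutes S}. (norm (\<Sum>j\<in>S. w j *\<^sub>R e (p j)))\<^sup>2)
     \<le> real (card {p. p permutes S}) / real (card S) * (\<Sum>j\<in>S. (w j)\<^sup>2) * (\<Sum>u\<in>S. (norm (e u))\<^sup>2)"
proof -
  let ?P = "{p. p permutes S}"
  define C where "C j l = (\<Sum>p\<in>?P. inner (e (p j)) (e (p l)))" for j l
  have "(\<Sum>p\<in>?P. (norm (\<Sum>j\<in>S. w j *\<^sub>R e (p j)))\<^sup>2) = (\<Sum>p\<in>?P. \<Sum>j\<in>S. \<Sum>l\<in>S. w j * w l * inner (e (p j)) (e (p l)))"
    by (simp add: power2_norm_eq_inner inner_sum_left inner_sum_right sum_distrib_left mult.assoc)
       (simp add: inner_commute)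
  also have "\<dots> = (\<Sum>j\<in>S. \<Sum>l\<in>S. w j * w l * C j l)"
    unfolding C_def by (simp add: sum_distrib_left sum.swap[of _ ?P])
  also have "\<dots> \<le> (\<Sum>j\<in>S. (w j)\<^sup>2 * C j j)"
  proof (rule sum_mono)
    fix j assume j: "j \<in> S"
    have "(\<Sum>l\<in>S. w j * w l * C j l) = w j * w j * C j j + (\<Sum>l\<in>S - {j}. w j * w l * C j l)"
      using sum.remove[OF S(1) j] by blast
    moreover have "(\<Sum>l\<in>S - {j}. w j * w l * C j l) \<le> 0"
    proof (intro sum_nonpos)
      fix l assume l: "l \<in> S - {j}"
      have "C j l \<le> 0" unfolding C_def using perm_offdiag[OF S(1) j _ _ e0] l by auto
      thus "w j * w l * C j l \<le> 0" using w j l by (simp add: mult_nonneg_nonpos)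
    qed
    ultimately show "(\<Sum>l\<in>S. w j * w l * C j l) \<le> (w j)\<^sup>2 * C j j" by (simp add: power2_eq_square)
  qed
  also have "\<dots> = (\<Sum>j\<in>S. (w j)\<^sup>2 * (real (card ?P) / real (card S) * (\<Sum>u\<in>S. (norm (e u))\<^sup>2)))"
  proof (intro sum.cong refl)
    fix j assume j: "j \<in> S"
    have "real (card S) * C j j = real (card ?P) * (\<Sum>u\<in>S. (norm (e u))\<^sup>2)"
      unfolding C_def using perm_diag[OF S(1) j, of "\<lambda>u. (norm (e u))\<^sup>2"] by (simp add: power2_norm_eq_inner)
    moreover have "card S > 0" using S by (simp add: card_gt_0_iff)
    ultimately show "(w j)\<^sup>2 * C j j = (w j)\<^sup>2 * (real (card ?P) / real (card S) * (\<Sum>u\<in>S. (norm (e u))\<^sup>2))"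
      by (simp add: field_simps)
  qed
  also have "\<dots> = real (card ?P) / real (card S) * (\<Sum>j\<in>S. (w j)\<^sup>2) * (\<Sum>u\<in>S. (norm (e u))\<^sup>2)"
  proof -
    have gen: "(\<Sum>j\<in>S. (w j)\<^sup>2 * K) = K * (\<Sum>j\<in>S. (w j)\<^sup>2)" for K :: real
      by (simp add: sum_distrib_left mult.commute)
    show ?thesis by (simp only: gen) (simp only: mult_ac)
  qed
  finally show ?thesis .
qed



lemma batch_sum:
  fixes f :: "nat \<Rightarrow> 'b::comm_monoid_add"
  shows "(\<Sum>t=1..i. \<Sum>j\<in>{(t-1)*b+1..t*b}. f j) = (\<Sum>j=1..i*b. f j)"
proof (induction i)
  case 0 then show ?case by simp
next
  case (Suc i)
  have "(\<Sum>j=1..Suc i*b. f j) = (\<Sum>j=1..i*b + b. f j)" by (simp add: add.commute)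
  also have "\<dots> = (\<Sum>j=1..i*b. f j) + (\<Sum>j=i*b+1..i*b + b. f j)" by (rule sum.ub_add_nat) simp
  finally show ?case using Suc by (simp add: add.commute)
qed

lemma batch_card: "t \<ge> 1 \<Longrightarrow> card {(t-1)*b+1..t*b} = b"
  by (cases t) auto

lemma batch_div:
  fixes t b j :: nat
  assumes "t \<ge> 1" "b \<ge> 1" "j \<in> {(t-1)*b+1..t*b}"
  shows "(j - 1) div b + 1 = t"
proof -
  obtain s where s: "t = Suc s" using assms(1) by (cases t) auto
  have j: "s * b + 1 \<le> j" "j \<le> s * b + b" using assms(3) s by auto
  have "(j - 1) div b = s"
    by (rule div_nat_eqI) (use j assms(2) in \<open>auto simp: algebra_simps\<close>)
  thus ?thesis using s by simp
qed

lemma wsum: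
  fixes G :: "nat \<Rightarrow> real \<Rightarrow> 'b::comm_monoid_add"
  assumes G0: "\<And>j. G j 0 = 0" and b: "b \<ge> 1" and ib: "i * b \<le> n"
  shows "(\<Sum>j=1..n. G j (if j \<le> i*b then a ((j-1) div b + 1) / real b else 0))
       = (\<Sum>t=1..i. \<Sum>j\<in>{(t-1)*b+1..t*b}. G j (a t / real b))"
proof -
  let ?w = "\<lambda>j. (if j \<le> i*b then a ((j-1) div b + 1) / real b else 0)"
  have "(\<Sum>j=1..n. G j (?w j)) = (\<Sum>j=1..i*b. G j (?w j))"
    using ib by (intro sum.mono_neutral_right) (auto simp: G0)
  also have "\<dots> = (\<Sum>t=1..i. \<Sum>j\<in>{(t-1)*b+1..t*b}. G j (?w j))" by (rule batch_sum[symmetric])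
  also have "\<dots> = (\<Sum>t=1..i. \<Sum>j\<in>{(t-1)*b+1..t*b}. G j (a t / real b))"
  proof (intro sum.cong refl)
    fix t j assume t: "t \<in> {1..i}" and j: "j \<in> {(t-1)*b+1..t*b}"
    have "j \<le> i * b" using t j by (meson atLeastAtMost_iff le_trans mult_le_mono1)
    thus "G j (?w j) = G j (a t / real b)" using batch_div[of t b j] t j b by simp
  qed
  finally show ?thesis .
qed


lemma core_pw:
  fixes gr :: "nat \<Rightarrow> 'a::real_inner \<Rightarrow> 'a" and Y :: "nat \<Rightarrow> 'a" and z :: 'a and a :: "nat \<Rightarrow> real"
  assumes p: "p permutes {1..n}" and b: "b \<ge> 1" and nm: "n = m * b" and i: "1 \<le> i" "i \<le> m"
    and a: "\<And>t. t \<in> {1..i} \<Longrightarrow> a t \<ge> 0"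
    and lip: "\<And>u x y. u \<in> {1..n} \<Longrightarrow> norm (gr u x - gr u y) \<le> L * norm (x - y)"
  defines "gf \<equiv> (1/real n) *\<^sub>R (\<Sum>u=1..n. gr u z)"
  defines "w \<equiv> \<lambda>j. if j \<le> i*b then a ((j-1) div b + 1) / real b else 0"
  shows "(norm (\<Sum>t=1..i. a t *\<^sub>R ((1/real b) *\<^sub>R (\<Sum>j\<in>{(t-1)*b+1..t*b}. gr (p j) (Y t)))))\<^sup>2
     \<le> 3 * (\<Sum>t=1..i. a t) * Max (a ` {1..i}) * (L\<^sup>2 * (\<Sum>t=1..m. (norm (Y t - z))\<^sup>2))
       + 3 * (norm (\<Sum>j=1..n. w j *\<^sub>R (gr (p j) z - gf)))\<^sup>2 + 3 * (\<Sum>t=1..i. a t)\<^sup>2 * (norm gf)\<^sup>2"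
proof -
  define S where "S = (\<Sum>t=1..i. a t)"
  define M where "M = Max (a ` {1..i})"
  have aM: "a t \<le> M" if "t \<in> {1..i}" for t unfolding M_def using that by simp
  have M0: "M \<ge> 0" using aM[of 1] a[of 1] i by simp
  have S0: "S \<ge> 0" unfolding S_def using a by (intro sum_nonneg) auto
  have inb: "j \<in> {1..n}" if "t \<in> {1..i}" "j \<in> {(t-1)*b+1..t*b}" for t j
  proof -
    have "t * b \<le> m * b" using that i by (intro mult_le_mono1) simp
    hence "j \<le> n" using that nm by (meson atLeastAtMost_iff le_trans)
    moreover have "j \<ge> 1" using that by simp
    ultimately show ?thesis by simp
  qed
  define A where "A t = (1/real b) *\<^sub>R (\<Sum>j\<in>{(t-1)*b+1..t*b}. gr (p j) (Y t) - gr (p j) z)" for t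
  define B where "B t = (1/real b) *\<^sub>R (\<Sum>j\<in>{(t-1)*b+1..t*b}. gr (p j) z - gf)" for t
  have dec: "(1/real b) *\<^sub>R (\<Sum>j\<in>{(t-1)*b+1..t*b}. gr (p j) (Y t)) = A t + B t + gf" if t: "t \<in> {1..i}" for t
  proof -
    let ?I = "{(t-1)*b+1..t*b}"
    have "(\<Sum>j\<in>?I. gr (p j) (Y t)) = (\<Sum>j\<in>?I. (gr (p j) (Y t) - gr (p j) z) + (gr (p j) z - gf) + gf)"
      by simp
    also have "\<dots> = (\<Sum>j\<in>?I. gr (p j) (Y t) - gr (p j) z) + (\<Sum>j\<in>?I. gr (p j) z - gf) + (\<Sum>j\<in>?I. gf)"
      by (simp only: sum.distrib)
    also have "(\<Sum>j\<in>?I. gf) = real b *\<^sub>R gf"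
      using batch_card[of t b] t sum_constant_scaleR[of gf ?I] by (simp only:) simp
    finally show ?thesis using b unfolding A_def B_def by (simp add: scaleR_add_right)
  qed
  have sdec: "(\<Sum>t=1..i. a t *\<^sub>R ((1/real b) *\<^sub>R (\<Sum>j\<in>{(t-1)*b+1..t*b}. gr (p j) (Y t))))
      = (\<Sum>t=1..i. a t *\<^sub>R A t) + (\<Sum>t=1..i. a t *\<^sub>R B t) + S *\<^sub>R gf"
  proof -
    have "(\<Sum>t=1..i. a t *\<^sub>R ((1/real b) *\<^sub>R (\<Sum>j\<in>{(t-1)*b+1..t*b}. gr (p j) (Y t))))
        = (\<Sum>t=1..i. a t *\<^sub>R A t + a t *\<^sub>R B t + a t *\<^sub>R gf)"
      using dec by (intro sum.cong refl) (simp add: scaleR_add_right)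
    thus ?thesis unfolding S_def by (simp add: sum.distrib scaleR_sum_left)
  qed
  have nA: "(norm (A t))\<^sup>2 \<le> L\<^sup>2 * (norm (Y t - z))\<^sup>2" if t: "t \<in> {1..i}" for t
  proof -
    have "norm (A t) = (1/real b) * norm (\<Sum>j\<in>{(t-1)*b+1..t*b}. gr (p j) (Y t) - gr (p j) z)"
      unfolding A_def using b by simp
    also have "\<dots> \<le> (1/real b) * (\<Sum>j\<in>{(t-1)*b+1..t*b}. L * norm (Y t - z))"
    proof (intro mult_left_mono order.trans[OF norm_sum] sum_mono)
      fix j assume "j \<in> {(t-1)*b+1..t*b}"
      hence "p j \<in> {1..n}" using inb[OF t] permutes_in_image[OF p] by blast
      thus "norm (gr (p j) (Y t) - gr (p j) z) \<le> L * norm (Y t - z)" by (rule lip)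
    qed simp
    also have "\<dots> = L * norm (Y t - z)" using batch_card[of t b] t b by simp
    finally have "norm (A t) \<le> L * norm (Y t - z)" .
    hence "(norm (A t))\<^sup>2 \<le> (L * norm (Y t - z))\<^sup>2" by (simp add: power_mono)
    thus ?thesis by (simp add: power_mult_distrib)
  qed
  have partA: "(norm (\<Sum>t=1..i. a t *\<^sub>R A t))\<^sup>2 \<le> S * M * (L\<^sup>2 * (\<Sum>t=1..m. (norm (Y t - z))\<^sup>2))"
  proof -
    have "(norm (\<Sum>t=1..i. a t *\<^sub>R A t))\<^sup>2 \<le> S * M * (\<Sum>t=1..i. (norm (A t))\<^sup>2)"
      unfolding S_def using a aM by (intro wcs) auto
    also have "\<dots> \<le> S * M * (\<Sum>t=1..i. L\<^sup>2 * (norm (Y t - z))\<^sup>2)"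
      using nA S0 M0 by (intro mult_left_mono sum_mono) auto
    also have "\<dots> \<le> S * M * (\<Sum>t=1..m. L\<^sup>2 * (norm (Y t - z))\<^sup>2)"
      using S0 M0 i by (intro mult_left_mono sum_mono2) auto
    finally show ?thesis by (simp add: sum_distrib_left)
  qed
  have partB: "(\<Sum>t=1..i. a t *\<^sub>R B t) = (\<Sum>j=1..n. w j *\<^sub>R (gr (p j) z - gf))"
  proof -
    have "(\<Sum>j=1..n. w j *\<^sub>R (gr (p j) z - gf)) = (\<Sum>t=1..i. \<Sum>j\<in>{(t-1)*b+1..t*b}. (a t / real b) *\<^sub>R (gr (p j) z - gf))"
      unfolding w_def using wsum[of "\<lambda>j x. x *\<^sub>R (gr (p j) z - gf)" b i n a] b i nm by simp
    thus ?thesis unfolding B_def by (simp add: scaleR_sum_right)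
  qed
  have partC: "(norm (S *\<^sub>R gf))\<^sup>2 = S\<^sup>2 * (norm gf)\<^sup>2" using S0 by (simp add: power_mult_distrib)
  show ?thesis
    using three_sq[of "\<Sum>t=1..i. a t *\<^sub>R A t" "\<Sum>t=1..i. a t *\<^sub>R B t" "S *\<^sub>R gf"] partA partB partC
      mult.assoc[of 3 S M] mult.assoc[of "3*S" M "L\<^sup>2 * (\<Sum>t=1..m. (norm (Y t - z))\<^sup>2)"]
      mult.assoc[of 3 "S\<^sup>2" "(norm gf)\<^sup>2"]
    unfolding sdec S_def[symmetric] M_def[symmetric] partB by linarith
qed


lemma w_props:
  fixes a :: "nat \<Rightarrow> real"
  assumes b: "b \<ge> 1" and nm: "n = m * b" and i: "1 \<le> i" "i \<le> m"
    and a: "\<And>t. t \<in> {1..i} \<Longrightarrow> a t \<ge> 0"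
  defines "w \<equiv> \<lambda>j. if j \<le> i*b then a ((j-1) div b + 1) / real b else 0"
  shows "\<And>j. 0 \<le> w j" "\<And>j. w j \<le> Max (a ` {1..i}) / real b"
    "(\<Sum>j=1..n. w j) = (\<Sum>t=1..i. a t)"
    "(\<Sum>j=1..n. (w j)\<^sup>2) \<le> (\<Sum>t=1..i. a t) * Max (a ` {1..i}) / real b"
proof -
  define M where "M = Max (a ` {1..i})"
  have aM: "a t \<le> M" if "t \<in> {1..i}" for t unfolding M_def using that by simp
  have M0: "M \<ge> 0" using aM[of 1] a[of 1] i by simp
  have ib: "i * b \<le> n" using nm i by simp
  have tin: "(j-1) div b + 1 \<in> {1..i}" if "j \<le> i*b" "j \<ge> 1" for j
  proof -
    have "j - 1 < i * b" using that by simp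
    hence "(j-1) div b < i" by (simp add: less_mult_imp_div_less)
    thus ?thesis by simp
  qed
  fix j
  show "0 \<le> w j"
  proof (cases "j \<le> i*b \<and> j \<ge> 1")
    case True thus ?thesis unfolding w_def using a[OF tin] by simp
  next
    case False
    hence "j = 0 \<or> \<not> j \<le> i * b" by auto
    thus ?thesis unfolding w_def using a[of 1] i by auto
  qed
  show "w j \<le> Max (a ` {1..i}) / real b"
  proof (cases "j \<le> i*b \<and> j \<ge> 1")
    case True thus ?thesis unfolding w_def M_def[symmetric] using aM[OF tin] b
      by (simp add: divide_right_mono)
  next
    case False
    hence "j = 0 \<or> \<not> j \<le> i * b" by auto
    thus ?thesis unfolding w_def M_def[symmetric] using aM[of 1] i M0 b by (auto intro: divide_right_mono)
  qed
next
  have ib: "i * b \<le> n" using nm i by simp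
  have "(\<Sum>j=1..n. w j) = (\<Sum>t=1..i. \<Sum>j\<in>{(t-1)*b+1..t*b}. a t / real b)"
    unfolding w_def using wsum[of "\<lambda>j x. x" b i n a] b ib by simp
  also have "\<dots> = (\<Sum>t=1..i. a t)"
  proof (rule sum.cong[OF refl])
    fix t assume "t \<in> {1..i}"
    thus "(\<Sum>j\<in>{(t-1)*b+1..t*b}. a t / real b) = a t" using batch_card[of t b] b
      by (simp only: sum_constant) simp
  qed
  finally show "(\<Sum>j=1..n. w j) = (\<Sum>t=1..i. a t)" .
next
  define M where "M = Max (a ` {1..i})"
  have aM: "a t \<le> M" if "t \<in> {1..i}" for t unfolding M_def using that by simp
  have ib: "i * b \<le> n" using nm i by simp
  have "(\<Sum>j=1..n. (w j)\<^sup>2) = (\<Sum>t=1..i. \<Sum>j\<in>{(t-1)*b+1..t*b}. (a t / real b)\<^sup>2)"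
    unfolding w_def using wsum[of "\<lambda>j x. x\<^sup>2" b i n a] b ib by simp
  also have "\<dots> = (\<Sum>t=1..i. a t * a t / real b)"
  proof (rule sum.cong[OF refl])
    fix t assume "t \<in> {1..i}"
    thus "(\<Sum>j\<in>{(t-1)*b+1..t*b}. (a t / real b)\<^sup>2) = a t * a t / real b" using batch_card[of t b] b
      by (simp only: sum_constant) (simp add: power2_eq_square)
  qed
  also have "\<dots> \<le> (\<Sum>t=1..i. a t * M / real b)"
    using a aM b by (intro sum_mono divide_right_mono mult_left_mono) auto
  finally show "(\<Sum>j=1..n. (w j)\<^sup>2) \<le> (\<Sum>t=1..i. a t) * Max (a ` {1..i}) / real b"
    unfolding M_def[symmetric] by (simp add: sum_distrib_right sum_divide_distrib)
qed



lemma core_a: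
  fixes gr :: "nat \<Rightarrow> 'a::real_inner \<Rightarrow> 'a" and Y :: "nat \<Rightarrow> 'a" and z :: 'a and a :: "nat \<Rightarrow> real"
  assumes p: "p permutes {1..n}" and b: "b \<ge> 1" and nm: "n = m * b" and i: "1 \<le> i" "i \<le> m"
    and a0: "\<And>t. t \<in> {1..i} \<Longrightarrow> a t \<ge> 0"
    and lip: "\<And>u x y. u \<in> {1..n} \<Longrightarrow> norm (gr u x - gr u y) \<le> L * norm (x - y)"
  defines "gf \<equiv> (1/real n) *\<^sub>R (\<Sum>u=1..n. gr u z)"
  defines "sig \<equiv> (1/real n) * (\<Sum>u=1..n. (norm (gr u z - gf))\<^sup>2)"
  shows "(norm (\<Sum>t=1..i. a t *\<^sub>R ((1/real b) *\<^sub>R (\<Sum>j\<in>{(t-1)*b+1..t*b}. gr (p j) (Y t)))))\<^sup>2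
     \<le> 3 * (\<Sum>t=1..i. a t) * Max (a ` {1..i}) * (L\<^sup>2 * (\<Sum>t=1..m. (norm (Y t - z))\<^sup>2) + real m * sig)
       + 3 * (\<Sum>t=1..i. a t)\<^sup>2 * (norm gf)\<^sup>2"
proof -
  define w where "w = (\<lambda>j. if j \<le> i*b then a ((j-1) div b + 1) / real b else 0)"
  define S where "S = (\<Sum>t=1..i. a t)"
  define M where "M = Max (a ` {1..i})"
  define Q where "Q = (\<Sum>t=1..m. (norm (Y t - z))\<^sup>2)"
  have wp: "\<And>j. 0 \<le> w j" "\<And>j. w j \<le> M / real b" "(\<Sum>j=1..n. w j) = S"
    "(\<Sum>j=1..n. (w j)\<^sup>2) \<le> S * M / real b"
    using w_props[where a=a and b=b and n=n and m=m and i=i, OF b nm i a0]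
    unfolding w_def S_def M_def by auto
  have n0: "real n > 0" using nm b i by simp
  have pw: "(norm (\<Sum>t=1..i. a t *\<^sub>R ((1/real b) *\<^sub>R (\<Sum>j\<in>{(t-1)*b+1..t*b}. gr (p j) (Y t)))))\<^sup>2
     \<le> 3 * S * M * (L\<^sup>2 * Q) + 3 * (norm (\<Sum>j=1..n. w j *\<^sub>R (gr (p j) z - gf)))\<^sup>2 + 3 * S\<^sup>2 * (norm gf)\<^sup>2"
    using core_pw[OF p b nm i a0 lip, where Y=Y and z=z] unfolding w_def S_def M_def Q_def gf_def by simp
  have "(norm (\<Sum>j=1..n. w j *\<^sub>R (gr (p j) z - gf)))\<^sup>2 \<le> S * (M / real b) * (\<Sum>j=1..n. (norm (gr (p j) z - gf))\<^sup>2)"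
    using wp(1,2) by (subst wp(3)[symmetric]) (rule wcs; auto)
  also have "(\<Sum>j=1..n. (norm (gr (p j) z - gf))\<^sup>2) = (\<Sum>u=1..n. (norm (gr u z - gf))\<^sup>2)"
    using sum.permute[OF p, of "\<lambda>u. (norm (gr u z - gf))\<^sup>2"] by (simp add: comp_def)
  also have "\<dots> = real n * sig" unfolding sig_def using n0 by simp
  also have "S * (M / real b) * (real n * sig) = S * M * (real m * sig)" using nm b by simp
  finally have W: "(norm (\<Sum>j=1..n. w j *\<^sub>R (gr (p j) z - gf)))\<^sup>2 \<le> S * M * (real m * sig)" .
  have "3 * S * M * (L\<^sup>2 * Q) + 3 * (S * M * (real m * sig)) = 3 * S * M * (L\<^sup>2 * Q + real m * sig)"
    by (simp add: algebra_simps)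
  thus ?thesis using pw W unfolding S_def[symmetric] M_def[symmetric] Q_def[symmetric] by linarith
qed


lemma core_b:
  fixes gr :: "nat \<Rightarrow> 'a::real_inner \<Rightarrow> 'a" and Y :: "(nat \<Rightarrow> nat) \<Rightarrow> nat \<Rightarrow> 'a" and z :: 'a
    and a :: "nat \<Rightarrow> real"
  assumes b: "b \<ge> 1" and nm: "n = m * b" and i: "1 \<le> i" "i \<le> m"
    and a0: "\<And>t. t \<in> {1..i} \<Longrightarrow> a t \<ge> 0"
    and lip: "\<And>u x y. u \<in> {1..n} \<Longrightarrow> norm (gr u x - gr u y) \<le> L * norm (x - y)"
  defines "gf \<equiv> (1/real n) *\<^sub>R (\<Sum>u=1..n. gr u z)"
  defines "sig \<equiv> (1/real n) * (\<Sum>u=1..n. (norm (gr u z - gf))\<^sup>2)"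
  defines "P \<equiv> {p. p permutes {1..n}}"
  shows "(\<Sum>p\<in>P. (norm (\<Sum>t=1..i. a t *\<^sub>R ((1/real b) *\<^sub>R (\<Sum>j\<in>{(t-1)*b+1..t*b}. gr (p j) (Y p t)))))\<^sup>2) / real (card P)
     \<le> 3 * (\<Sum>t=1..i. a t) * Max (a ` {1..i}) *
         (L\<^sup>2 * (\<Sum>t=1..m. (\<Sum>p\<in>P. (norm (Y p t - z))\<^sup>2) / real (card P)) + sig / real b)
       + 3 * (\<Sum>t=1..i. a t)\<^sup>2 * (norm gf)\<^sup>2"
proof -
  define w where "w = (\<lambda>j. if j \<le> i*b then a ((j-1) div b + 1) / real b else 0)"
  define S where "S = (\<Sum>t=1..i. a t)"
  define M where "M = Max (a ` {1..i})"
  define G where "G = (norm gf)\<^sup>2"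
  define Qp where "Qp p = (\<Sum>t=1..m. (norm (Y p t - z))\<^sup>2)" for p
  define Wp where "Wp p = (norm (\<Sum>j=1..n. w j *\<^sub>R (gr (p j) z - gf)))\<^sup>2" for p :: "nat \<Rightarrow> nat"
  define F where "F p = (norm (\<Sum>t=1..i. a t *\<^sub>R ((1/real b) *\<^sub>R (\<Sum>j\<in>{(t-1)*b+1..t*b}. gr (p j) (Y p t)))))\<^sup>2" for p
  define c where "c = real (card P)"
  have wp: "\<And>j. 0 \<le> w j" "\<And>j. w j \<le> M / real b" "(\<Sum>j=1..n. w j) = S"
    "(\<Sum>j=1..n. (w j)\<^sup>2) \<le> S * M / real b"
    using w_props[where a=a and b=b and n=n and m=m and i=i, OF b nm i a0]
    unfolding w_def S_def M_def by auto
  have n0: "real n > 0" using nm b i by simp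
  have finP: "finite P" unfolding P_def by (rule finite_permutations) simp
  have "id \<in> P" unfolding P_def by (simp add: permutes_id)
  hence c0: "c > 0" unfolding c_def using finP by (simp add: card_gt_0_iff) blast
  have S0: "S \<ge> 0" unfolding S_def using a0 by (intro sum_nonneg) auto
  have M0: "M \<ge> 0" unfolding M_def using a0[of 1] i by (meson Max_ge atLeastAtMost_iff finite_atLeastAtMost finite_imageI image_eqI le_refl order.trans)
  have pw: "F p \<le> 3 * S * M * (L\<^sup>2 * Qp p) + 3 * Wp p + 3 * S\<^sup>2 * G" if "p \<in> P" for p
    using core_pw[OF _ b nm i a0 lip, where Y="Y p" and z=z and p=p] that
    unfolding P_def w_def S_def M_def Qp_def Wp_def F_def G_def gf_def by simp
  have "(\<Sum>p\<in>P. F p) \<le> (\<Sum>p\<in>P. 3 * S * M * (L\<^sup>2 * Qp p) + 3 * Wp p + 3 * S\<^sup>2 * G)"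
    using pw by (rule sum_mono)
  also have "\<dots> = 3 * S * M * L\<^sup>2 * (\<Sum>p\<in>P. Qp p) + 3 * (\<Sum>p\<in>P. Wp p) + c * (3 * S\<^sup>2 * G)"
    unfolding c_def by (simp add: sum.distrib sum_distrib_left mult.assoc)
  finally have s1: "(\<Sum>p\<in>P. F p) \<le> 3 * S * M * L\<^sup>2 * (\<Sum>p\<in>P. Qp p) + 3 * (\<Sum>p\<in>P. Wp p) + c * (3 * S\<^sup>2 * G)" .
  have e0: "(\<Sum>u\<in>{1..n}. gr u z - gf) = 0"
  proof -
    have "(\<Sum>u\<in>{1..n}. gf) = real n *\<^sub>R gf" using sum_constant_scaleR[of gf "{1..n}"] by simp
    also have "\<dots> = (\<Sum>u=1..n. gr u z)" unfolding gf_def using n0 by simp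
    finally show ?thesis by (simp add: sum_subtractf)
  qed
  have "(\<Sum>p\<in>P. Wp p) \<le> c / real n * (\<Sum>j=1..n. (w j)\<^sup>2) * (\<Sum>u=1..n. (norm (gr u z - gf))\<^sup>2)"
    unfolding Wp_def c_def P_def using perm_main[of "{1..n}" "\<lambda>u. gr u z - gf" w] e0 wp(1) n0 by simp
  also have "\<dots> = c * (\<Sum>j=1..n. (w j)\<^sup>2) * sig" unfolding sig_def by simp
  also have "\<dots> \<le> c * (S * M / real b) * sig"
    using c0 wp(4) by (intro mult_right_mono mult_left_mono) (auto simp: sig_def intro!: divide_nonneg_nonneg sum_nonneg)
  finally have s2: "(\<Sum>p\<in>P. Wp p) \<le> c * (S * M / real b) * sig" .
  have s3: "(\<Sum>p\<in>P. Qp p) = c * (\<Sum>t=1..m. (\<Sum>p\<in>P. (norm (Y p t - z))\<^sup>2) / c)"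
    unfolding Qp_def using c0 by (simp add: sum.swap[of _ P] sum_divide_distrib[symmetric])
  have "(\<Sum>p\<in>P. F p) \<le> c * (3 * S * M * (L\<^sup>2 * (\<Sum>t=1..m. (\<Sum>p\<in>P. (norm (Y p t - z))\<^sup>2) / c) + sig / real b) + 3 * S\<^sup>2 * G)"
  proof -
    have "(\<Sum>p\<in>P. F p) \<le> 3 * S * M * L\<^sup>2 * (c * (\<Sum>t=1..m. (\<Sum>p\<in>P. (norm (Y p t - z))\<^sup>2) / c)) + 3 * (c * (S * M / real b) * sig) + c * (3 * S\<^sup>2 * G)"
      using s1 s2 unfolding s3 by linarith
    also have "\<dots> = c * (3 * S * M * (L\<^sup>2 * (\<Sum>t=1..m. (\<Sum>p\<in>P. (norm (Y p t - z))\<^sup>2) / c) + sig / real b) + 3 * S\<^sup>2 * G)"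
      by (simp add: algebra_simps)
    finally show ?thesis .
  qed
  hence "(\<Sum>p\<in>P. F p) / c \<le> 3 * S * M * (L\<^sup>2 * (\<Sum>t=1..m. (\<Sum>p\<in>P. (norm (Y p t - z))\<^sup>2) / c) + sig / real b) + 3 * S\<^sup>2 * G"
    using c0 by (simp add: divide_le_eq mult.commute)
  thus ?thesis unfolding F_def S_def M_def G_def c_def .
qed


lemma rrm_state_indep:
  "(\<And>j. 1 \<le> j \<Longrightarrow> j \<le> K \<Longrightarrow> prm j = prm' j) \<Longrightarrow>
   rrm_state g b m alpha beta lam prm x1 K = rrm_state g b m alpha beta lam prm' x1 K"
  by (induction K) auto

lemma Ek_eq:
  "Ek n prm k X = (\<Sum>p\<in>{p. p permutes {1..n}}. X (prm(k := p))) / real (card {p. p permutes {1..n}})"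
proof -
  have "{p. p permutes {1..n}} \<noteq> {}" using permutes_id by blast
  moreover have "finite {p. p permutes {1..n}}" by (rule finite_permutations) simp
  ultimately show ?thesis unfolding Ek_def by (simp add: integral_pmf_of_set)
qed

theorem lemmaB1:
  fixes n b :: nat and f :: "nat \<Rightarrow> 'a::euclidean_space \<Rightarrow> real" and gr :: "nat \<Rightarrow> 'a \<Rightarrow> 'a"
    and L fbar beta lam :: real and alpha :: "nat \<Rightarrow> real" and x1 :: 'a
  defines "m \<equiv> n div b"
  defines "gradf \<equiv> (\<lambda>x. (1 / real n) *\<^sub>R (\<Sum>t=1..n. gr t x))"
  defines "sigma2 \<equiv> (\<lambda>prm k. (1 / real n) * (\<Sum>t=1..n.
              (norm (gr t (rrm_z gr b m alpha beta lam prm x1 k) - gradf (rrm_z gr b m alpha beta lam prm x1 k)))\<^sup>2))"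
  assumes n_pos: "n \<ge> 1" and b_pos: "b \<ge> 1" and b_dvd: "b dvd n"
    and grad: "\<And>i x. i \<in> {1..n} \<Longrightarrow> GDERIV (f i) x :> gr i x"
    and grad_cont: "\<And>i. i \<in> {1..n} \<Longrightarrow> continuous_on UNIV (gr i)"
    and L_pos: "L > 0"
    and lip: "\<And>i x y. i \<in> {1..n} \<Longrightarrow> norm (gr i x - gr i y) \<le> L * norm (x - y)"
    and lower: "\<And>i x. i \<in> {1..n} \<Longrightarrow> f i x \<ge> fbar"
    and beta: "0 \<le> beta" "beta < 1"
    and alpha_pos: "\<And>k. k \<ge> 1 \<Longrightarrow> alpha k > 0"
  shows
   "(\<forall>prm. (\<forall>j\<ge>1. prm j permutes {1..n}) \<longrightarrow>
      (\<forall>k\<ge>1. \<forall>i\<in>{1..m}. \<forall>a::nat \<Rightarrow> real. (\<forall>t\<in>{1..i}. a t \<ge> 0) \<longrightarrow>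
        (norm (\<Sum>t=1..i. a t *\<^sub>R rrm_D gr b m alpha beta lam prm x1 k t))\<^sup>2
        \<le> 3 * (\<Sum>t=1..i. a t) * Max (a ` {1..i}) *
             (L\<^sup>2 * (\<Sum>t=1..m. (norm (rrm_Yhat gr b m alpha beta lam prm x1 k t - rrm_z gr b m alpha beta lam prm x1 k))\<^sup>2)
              + real m * sigma2 prm k)
          + 3 * (\<Sum>t=1..i. a t)\<^sup>2 * (norm (gradf (rrm_z gr b m alpha beta lam prm x1 k)))\<^sup>2))
    \<and>
    (\<forall>prm. (\<forall>j\<ge>1. prm j permutes {1..n}) \<longrightarrow>
      (\<forall>k\<ge>1. \<forall>i\<in>{1..m}. \<forall>a::nat \<Rightarrow> real. (\<forall>t\<in>{1..i}. a t \<ge> 0) \<longrightarrow>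
        Ek n prm k (\<lambda>prm'. (norm (\<Sum>t=1..i. a t *\<^sub>R rrm_D gr b m alpha beta lam prm' x1 k t))\<^sup>2)
        \<le> 3 * (\<Sum>t=1..i. a t) * Max (a ` {1..i}) *
             (L\<^sup>2 * (\<Sum>t=1..m. Ek n prm k (\<lambda>prm'.
                 (norm (rrm_Yhat gr b m alpha beta lam prm' x1 k t - rrm_z gr b m alpha beta lam prm' x1 k))\<^sup>2))
              + sigma2 prm k / real b)
          + 3 * (\<Sum>t=1..i. a t)\<^sup>2 * (norm (gradf (rrm_z gr b m alpha beta lam prm x1 k)))\<^sup>2))"
proof -
  have nm: "n = m * b" using b_dvd unfolding m_def by simp
  have Dform: "rrm_D gr b m alpha beta lam prm x1 k t = (1/real b) *\<^sub>R (\<Sum>j\<in>{(t-1)*b+1..t*b}. gr (prm k j) (rrm_Yhat gr b m alpha beta lam prm x1 k t))"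
    for prm :: "nat \<Rightarrow> nat \<Rightarrow> nat" and k t :: nat
    by (simp add: rrm_D_def rrm_dir_def rrm_Yhat_def)
  have P1: "\<forall>prm. (\<forall>j\<ge>1. prm j permutes {1..n}) \<longrightarrow>
      (\<forall>k\<ge>1. \<forall>i\<in>{1..m}. \<forall>a::nat \<Rightarrow> real. (\<forall>t\<in>{1..i}. a t \<ge> 0) \<longrightarrow>
        (norm (\<Sum>t=1..i. a t *\<^sub>R rrm_D gr b m alpha beta lam prm x1 k t))\<^sup>2
        \<le> 3 * (\<Sum>t=1..i. a t) * Max (a ` {1..i}) *
             (L\<^sup>2 * (\<Sum>t=1..m. (norm (rrm_Yhat gr b m alpha beta lam prm x1 k t - rrm_z gr b m alpha beta lam prm x1 k))\<^sup>2)
              + real m * sigma2 prm k)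
          + 3 * (\<Sum>t=1..i. a t)\<^sup>2 * (norm (gradf (rrm_z gr b m alpha beta lam prm x1 k)))\<^sup>2)"
  proof (intro allI impI ballI)
    fix prm :: "nat \<Rightarrow> nat \<Rightarrow> nat" and k i :: nat and a :: "nat \<Rightarrow> real"
    assume pr: "\<forall>j\<ge>1. prm j permutes {1..n}" and k: "k \<ge> 1" and i: "i \<in> {1..m}" and a: "\<forall>t\<in>{1..i}. a t \<ge> 0"
    have p: "prm k permutes {1..n}" using pr k by simp
    show "(norm (\<Sum>t=1..i. a t *\<^sub>R rrm_D gr b m alpha beta lam prm x1 k t))\<^sup>2
        \<le> 3 * (\<Sum>t=1..i. a t) * Max (a ` {1..i}) *
             (L\<^sup>2 * (\<Sum>t=1..m. (norm (rrm_Yhat gr b m alpha beta lam prm x1 k t - rrm_z gr b m alpha beta lam prm x1 k))\<^sup>2)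
              + real m * sigma2 prm k)
          + 3 * (\<Sum>t=1..i. a t)\<^sup>2 * (norm (gradf (rrm_z gr b m alpha beta lam prm x1 k)))\<^sup>2"
      unfolding Dform sigma2_def gradf_def
      using core_a[OF p b_pos nm _ _ _ lip, where i=i and a=a and Y="rrm_Yhat gr b m alpha beta lam prm x1 k"
          and z="rrm_z gr b m alpha beta lam prm x1 k"] i a by simp
  qed
  have P2: "\<forall>prm. (\<forall>j\<ge>1. prm j permutes {1..n}) \<longrightarrow>
      (\<forall>k\<ge>1. \<forall>i\<in>{1..m}. \<forall>a::nat \<Rightarrow> real. (\<forall>t\<in>{1..i}. a t \<ge> 0) \<longrightarrow>
        Ek n prm k (\<lambda>prm'. (norm (\<Sum>t=1..i. a t *\<^sub>R rrm_D gr b m alpha beta lam prm' x1 k t))\<^sup>2)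
        \<le> 3 * (\<Sum>t=1..i. a t) * Max (a ` {1..i}) *
             (L\<^sup>2 * (\<Sum>t=1..m. Ek n prm k (\<lambda>prm'.
                 (norm (rrm_Yhat gr b m alpha beta lam prm' x1 k t - rrm_z gr b m alpha beta lam prm' x1 k))\<^sup>2))
              + sigma2 prm k / real b)
          + 3 * (\<Sum>t=1..i. a t)\<^sup>2 * (norm (gradf (rrm_z gr b m alpha beta lam prm x1 k)))\<^sup>2)"
  proof (intro allI impI ballI)
    fix prm :: "nat \<Rightarrow> nat \<Rightarrow> nat" and k i :: nat and a :: "nat \<Rightarrow> real"
    assume pr: "\<forall>j\<ge>1. prm j permutes {1..n}" and k: "k \<ge> 1" and i: "i \<in> {1..m}" and a: "\<forall>t\<in>{1..i}. a t \<ge> 0"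
    define XT where "XT = rrm_xt gr b m alpha beta lam prm x1 k"
    define X where "X = rrm_x gr b m alpha beta lam prm x1 k"
    define z where "z = rrm_z gr b m alpha beta lam prm x1 k"
    define Yp where "Yp p t = rrm_yhat gr b (alpha k) beta lam p XT X t" for p t
    have st: "rrm_state gr b m alpha beta lam (prm(k := p)) x1 (k - 1) = rrm_state gr b m alpha beta lam prm x1 (k - 1)" for p
      using k by (intro rrm_state_indep) auto
    have eqxt: "rrm_xt gr b m alpha beta lam (prm(k := p)) x1 k = XT" for p
      unfolding XT_def rrm_xt_def st ..
    have eqx: "rrm_x gr b m alpha beta lam (prm(k := p)) x1 k = X" for p
      unfolding X_def rrm_x_def st ..
    have eqz: "rrm_z gr b m alpha beta lam (prm(k := p)) x1 k = z" for p
      unfolding z_def rrm_z_def eqxt eqx XT_def X_def ..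
    have eqY: "rrm_Yhat gr b m alpha beta lam (prm(k := p)) x1 k t = Yp p t" for p t
      unfolding rrm_Yhat_def eqxt eqx Yp_def by simp
    have eqD: "rrm_D gr b m alpha beta lam (prm(k := p)) x1 k t = (1/real b) *\<^sub>R (\<Sum>j\<in>{(t-1)*b+1..t*b}. gr (p j) (Yp p t))" for p t
      unfolding Dform eqY by simp
    show "Ek n prm k (\<lambda>prm'. (norm (\<Sum>t=1..i. a t *\<^sub>R rrm_D gr b m alpha beta lam prm' x1 k t))\<^sup>2)
        \<le> 3 * (\<Sum>t=1..i. a t) * Max (a ` {1..i}) *
             (L\<^sup>2 * (\<Sum>t=1..m. Ek n prm k (\<lambda>prm'.
                 (norm (rrm_Yhat gr b m alpha beta lam prm' x1 k t - rrm_z gr b m alpha beta lam prm' x1 k))\<^sup>2))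
              + sigma2 prm k / real b)
          + 3 * (\<Sum>t=1..i. a t)\<^sup>2 * (norm (gradf (rrm_z gr b m alpha beta lam prm x1 k)))\<^sup>2"
      unfolding Ek_eq eqD eqY eqz sigma2_def gradf_def z_def[symmetric]
      using core_b[OF b_pos nm _ _ _ lip, where i=i and a=a and Y=Yp and z=z] i a by simp
  qed
  show ?thesis using P1 P2 by blast
qed


end
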